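(* Let $V$ be a vector space over a field $k$ and let $\mathcal{P}_{k\mathrm{fin}}(V)$ be the set of finite-dimensional $k$-subspaces of $V$. Let $f:\mathcal{P}_{k\mathrm{fin}}(V)\to\mathbb{R}$ satisfy $f(W_1\cap W_2)+f(W_1+W_2)\leq f(W_1)+f(W_2)$ for all $W_1,W_2\in\mathcal{P}_{k\mathrm{fin}}(V)$, and assume that $m=\min_{W\in\mathcal{P}_{k\mathrm{fin}}(V),\,W\neq\{0\}}f(W)$ exists. If $W_1$ and $W_2$ are two atoms of $f$, then $W_1=W_2$ or $W_1\cap W_2=\{0\}$.
   Context: A fragment for $f$ is a nonzero finite-dimensional subspace $W$ with $f(W)=m$; an atom for $f$ is a fragment of minimal dimension among fragments. *)

theory Defs
  imports Complex_Main
begin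

definition fin_subspace :: "('a::field \<Rightarrow> 'b::ab_group_add \<Rightarrow> 'b) \<Rightarrow> 'b set \<Rightarrow> bool" where
  "fin_subspace scale W \<longleftrightarrow>
     module.subspace scale W \<and> (\<exists>B. finite B \<and> module.span scale B = W)"

definition subspace_sum :: "'b::ab_group_add set \<Rightarrow> 'b set \<Rightarrow> 'b set" where
  "subspace_sum W1 W2 = {x + y | x y. x \<in> W1 \<and> y \<in> W2}"

definition is_min_nonzero :: "('a::field \<Rightarrow> 'b::ab_group_add \<Rightarrow> 'b) \<Rightarrow> ('b set \<Rightarrow> real) \<Rightarrow> real \<Rightarrow> bool" where
  "is_min_nonzero scale f m \<longleftrightarrow>
     (\<exists>W. fin_subspace scale W \<and> W \<noteq> {0} \<and> f W = m) \<and>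
     (\<forall>W. fin_subspace scale W \<and> W \<noteq> {0} \<longrightarrow> m \<le> f W)"

definition fragment :: "('a::field \<Rightarrow> 'b::ab_group_add \<Rightarrow> 'b) \<Rightarrow> ('b set \<Rightarrow> real) \<Rightarrow> real \<Rightarrow> 'b set \<Rightarrow> bool" where
  "fragment scale f m W \<longleftrightarrow> fin_subspace scale W \<and> W \<noteq> {0} \<and> f W = m"

definition atom :: "('a::field \<Rightarrow> 'b::ab_group_add \<Rightarrow> 'b) \<Rightarrow> ('b set \<Rightarrow> real) \<Rightarrow> real \<Rightarrow> 'b set \<Rightarrow> bool" where
  "atom scale f m W \<longleftrightarrow> fragment scale f m W \<and>
     (\<forall>W'. fragment scale f m W' \<longrightarrow> vector_space.dim scale W \<le> vector_space.dim scale W')"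

end

theory Submission
  imports Defs
begin

context vector_space
begin

lemma fin_sub_inter:
  assumes "subspace U" "finite B" "U \<subseteq> span B"
  shows "\<exists>A. finite A \<and> span A = U"
proof -
  obtain A where A: "A \<subseteq> U" "independent A" "U \<subseteq> span A"
    using maximal_independent_subset[of U] by blast
  have "finite A" using independent_span_bound[OF assms(2) A(2)] A(1) assms(3) by blast
  moreover have "span A = U" using span_subspace[OF A(1) A(3) assms(1)] .
  ultimately show ?thesis by blast
qed

lemma sub_dim_eq:
  assumes "subspace I" "I \<subseteq> W" "W = span B" "finite B" "dim W \<le> dim I"
  shows "I = W"
proof (rule ccontr)
  assume ne: "I \<noteq> W"
  then obtain x where x: "x \<in> W" "x \<notin> I" using assms(2) by blast
  obtain A where A: "A \<subseteq> I" "independent A" "I \<subseteq> span A"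
    using maximal_independent_subset[of I] by blast
  have WspB: "W \<subseteq> span B" using assms(3) span_superset by blast
  have finA: "finite A" using independent_span_bound[OF assms(4) A(2)] A(1) assms(2) WspB by blast
  have cA: "card A = dim I" using basis_card_eq_dim[OF A(1) A(3) A(2)] .
  have spA: "span A = I" using span_subspace[OF A(1) A(3) assms(1)] .
  have xA: "x \<notin> span A" using spA x by simp
  have ind: "independent (insert x A)" using independent_insert A(2) xA by simp
  obtain C where C: "C \<subseteq> W" "independent C" "W \<subseteq> span C" "card C = dim W"
    using basis_exists[of W] by blast
  have finC: "finite C" using independent_span_bound[OF assms(4) C(2)] C(1) WspB by blast
  have "insert x A \<subseteq> span C" using x(1) A(1) assms(2) C(3) by blast
  then have "card (insert x A) \<le> card C" using independent_span_bound[OF finC ind] by blast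
  moreover have "card (insert x A) = card A + 1" using finA xA span_superset[of A] card_insert_disjoint by (metis Suc_eq_plus1 subsetD)
  ultimately show False using C(4) cA assms(5) by linarith
qed

end

theorem mainTheorem17:
  fixes scale :: "'a::field \<Rightarrow> 'b::ab_group_add \<Rightarrow> 'b"
    and f :: "'b set \<Rightarrow> real" and m :: real and W1 W2 :: "'b set"
  assumes "vector_space scale"
    and submod: "\<And>U1 U2. fin_subspace scale U1 \<Longrightarrow> fin_subspace scale U2 \<Longrightarrow>
        f (U1 \<inter> U2) + f (subspace_sum U1 U2) \<le> f U1 + f U2"
    and "is_min_nonzero scale f m"
    and "atom scale f m W1" and "atom scale f m W2"
  shows "W1 = W2 \<or> W1 \<inter> W2 = {0}"
proof (rule ccontr)
  interpret V: vector_space scale by fact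
  assume "\<not> (W1 = W2 \<or> W1 \<inter> W2 = {0})"
  hence ne: "W1 \<inter> W2 \<noteq> {0}" by blast
  have a1: "fin_subspace scale W1" "W1 \<noteq> {0}" "f W1 = m"
    and d1: "\<And>W'. fragment scale f m W' \<Longrightarrow> V.dim W1 \<le> V.dim W'"
    using assms(4) unfolding atom_def fragment_def by auto
  have a2: "fin_subspace scale W2" "W2 \<noteq> {0}" "f W2 = m"
    and d2: "\<And>W'. fragment scale f m W' \<Longrightarrow> V.dim W2 \<le> V.dim W'"
    using assms(5) unfolding atom_def fragment_def by auto
  obtain B1 where B1: "finite B1" "V.span B1 = W1" "V.subspace W1"
    using a1(1) unfolding fin_subspace_def by blast
  obtain B2 where B2: "finite B2" "V.span B2 = W2" "V.subspace W2"
    using a2(1) unfolding fin_subspace_def by blast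
  have subI: "V.subspace (W1 \<inter> W2)" using V.subspace_inter B1(3) B2(3) by blast
  obtain A where "finite A" "V.span A = W1 \<inter> W2"
    using V.fin_sub_inter[OF subI B1(1)] B1(2) by auto
  hence finI: "fin_subspace scale (W1 \<inter> W2)" using subI unfolding fin_subspace_def by blast
  have spS: "V.span (B1 \<union> B2) = subspace_sum W1 W2"
    unfolding subspace_sum_def V.span_Un B1(2) B2(2) ..
  have finS: "fin_subspace scale (subspace_sum W1 W2)"
    unfolding fin_subspace_def using spS[symmetric] B1(1) B2(1) by auto
  have "0 \<in> W2" using B2(3) V.subspace_0 by blast
  hence "W1 \<subseteq> subspace_sum W1 W2" unfolding subspace_sum_def by force
  hence neS: "subspace_sum W1 W2 \<noteq> {0}" using a1(2) B1(3) V.subspace_0 by blast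
  have mI: "m \<le> f (W1 \<inter> W2)" and mS: "m \<le> f (subspace_sum W1 W2)"
    using assms(3) finI ne finS neS unfolding is_min_nonzero_def by auto
  have "f (W1 \<inter> W2) + f (subspace_sum W1 W2) \<le> f W1 + f W2" using submod a1(1) a2(1) by blast
  hence "f (W1 \<inter> W2) = m" using mI mS a1(3) a2(3) by linarith
  hence fr: "fragment scale f m (W1 \<inter> W2)" unfolding fragment_def using finI ne by blast
  have "W1 \<inter> W2 = W1" using V.sub_dim_eq[OF subI _ B1(2)[symmetric] B1(1) d1[OF fr]] by blast
  moreover have "W1 \<inter> W2 = W2" using V.sub_dim_eq[OF subI _ B2(2)[symmetric] B2(1) d2[OF fr]] by blast
  ultimately show False using \<open>\<not> (W1 = W2 \<or> W1 \<inter> W2 = {0})\<close> by blast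
qed

end
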